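(* If $\mathcal M'$ is a simple acyclic oriented matroid on a finite set $E$, then there is a total order $<$ of $E$ such that there is a strong map $\mathcal M'\longrightarrow\mathcal M(<)$.
   Context: For a finite set $E$ totally ordered by $<$, $\mathcal M(<)$ is the uniform rank 2 oriented matroid on $E$ whose signed circuits are $(\{e_1,e_3\},\{e_2\})$ and $(\{e_2\},\{e_1,e_3\})$ for $e_1<e_2<e_3$, and whose signed cocircuits are $(\{e':e'<e\},\{e'':e''>e\})$ and its opposite, for $e\in E$. For two oriented matroids $\mathcal M_1,\mathcal M_2$ on the same ground set, a strong map $\mathcal M_1\longrightarrow\mathcal M_2$ exists if every cocircuit of $\mathcal M_2$ is a covector of $\mathcal M_1$ (equivalently, every circuit of $\mathcal M_1$ is a vector of $\mathcal M_2$). *)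

theory Defs
  imports Main
begin

text \<open>Signed subsets of a ground set: pairs (X+, X-) of disjoint sets.\<close>
type_synonym 'a signed_set = "'a set \<times> 'a set"

definition supp :: "'a signed_set \<Rightarrow> 'a set" where
  "supp X = fst X \<union> snd X"

definition neg_ss :: "'a signed_set \<Rightarrow> 'a signed_set" where
  "neg_ss X = (snd X, fst X)"

definition comp_ss :: "'a signed_set \<Rightarrow> 'a signed_set \<Rightarrow> 'a signed_set" where
  "comp_ss X Y = (fst X \<union> (fst Y - snd X), snd X \<union> (snd Y - fst X))"

definition oriented_matroid :: "'a set \<Rightarrow> 'a signed_set set \<Rightarrow> bool" where
  "oriented_matroid E \<C> \<longleftrightarrow>
     (\<forall>X\<in>\<C>. fst X \<inter> snd X = {} \<and> supp X \<subseteq> E) \<and>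
     (\<forall>X\<in>\<C>. supp X \<noteq> {}) \<and>
     (\<forall>X\<in>\<C>. neg_ss X \<in> \<C>) \<and>
     (\<forall>X\<in>\<C>. \<forall>Y\<in>\<C>. supp X \<subseteq> supp Y \<longrightarrow> X = Y \<or> X = neg_ss Y) \<and>
     (\<forall>X\<in>\<C>. \<forall>Y\<in>\<C>. \<forall>e. X \<noteq> neg_ss Y \<and> e \<in> fst X \<inter> snd Y \<longrightarrow>
        (\<exists>Z\<in>\<C>. fst Z \<subseteq> (fst X \<union> fst Y) - {e} \<and> snd Z \<subseteq> (snd X \<union> snd Y) - {e}))"

text \<open>Simple: no loops (circuits of size 1) and no parallel pairs (circuits of size 2).\<close>
definition simple_om :: "'a signed_set set \<Rightarrow> bool" where
  "simple_om \<C> \<longleftrightarrow> (\<forall>X\<in>\<C>. card (supp X) \<ge> 3)"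

definition acyclic_om :: "'a signed_set set \<Rightarrow> bool" where
  "acyclic_om \<C> \<longleftrightarrow> (\<forall>X\<in>\<C>. snd X \<noteq> {})"

inductive_set vectors :: "'a signed_set set \<Rightarrow> 'a signed_set set" for \<C> where
  zero: "({}, {}) \<in> vectors \<C>"
| comp: "X \<in> \<C> \<Longrightarrow> V \<in> vectors \<C> \<Longrightarrow> comp_ss X V \<in> vectors \<C>"

text \<open>Circuits of the rank 2 uniform oriented matroid M(<) on E, for a strict order r.\<close>
definition circuits_M_order :: "'a set \<Rightarrow> ('a \<times> 'a) set \<Rightarrow> 'a signed_set set" where
  "circuits_M_order E r =
     {({e1, e3}, {e2}) | e1 e2 e3. e1 \<in> E \<and> e2 \<in> E \<and> e3 \<in> E \<and> (e1, e2) \<in> r \<and> (e2, e3) \<in> r}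
   \<union> {({e2}, {e1, e3}) | e1 e2 e3. e1 \<in> E \<and> e2 \<in> E \<and> e3 \<in> E \<and> (e1, e2) \<in> r \<and> (e2, e3) \<in> r}"

definition strong_map :: "'a signed_set set \<Rightarrow> 'a signed_set set \<Rightarrow> bool" where
  "strong_map \<C>1 \<C>2 \<longleftrightarrow> \<C>1 \<subseteq> vectors \<C>2"

end

theory Submission imports Defs begin

definition good :: "'a signed_set set \<Rightarrow> 'a set \<Rightarrow> bool" where
  "good C I \<longleftrightarrow> (\<forall>X\<in>C. \<not>(fst X \<subseteq> I \<and> snd X \<inter> I = {}))"

lemma step_gen:
  assumes "finite J" "J \<noteq> {}" "K \<inter> J = {}"
    and H1: "\<forall>X\<in>C. fst X \<inter> snd X = {}"
    and Hneg: "\<forall>X\<in>C. neg_ss X \<in> C"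
    and H2: "\<forall>X\<in>C. \<forall>Y\<in>C. \<forall>e. X \<noteq> neg_ss Y \<and> e \<in> fst X \<inter> snd Y \<longrightarrow>
        (\<exists>Z\<in>C. fst Z \<subseteq> (fst X \<union> fst Y) - {e} \<and> snd Z \<subseteq> (snd X \<union> snd Y) - {e})"
    and H4: "\<forall>X\<in>C. card (supp X) \<ge> 3"
    and H5: "\<forall>X\<in>C. supp X \<subseteq> K \<union> J"
    and H3: "\<forall>X\<in>C. snd X \<noteq> {}"
    and G: "good C K"
  shows "\<exists>e\<in>J. good C (insert e K)"
  using assms
proof (induction J arbitrary: C rule: finite_induct)
  case empty
  then show ?case by simp
next
  case (insert h J0 C)
  show ?case
  proof (cases "J0 = {}")
    case True
    have "good C (insert h K)"
      unfolding good_def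
    proof
      fix X assume X: "X \<in> C"
      have "snd X \<subseteq> K \<union> {h}" using insert.prems(7) X True by (auto simp: supp_def)
      then show "\<not>(fst X \<subseteq> insert h K \<and> snd X \<inter> insert h K = {})"
        using insert.prems(8) X by blast
    qed
    then show ?thesis by simp
  next
    case False
    define C' where "C' = {X\<in>C. h \<notin> supp X}"
    have "\<exists>e\<in>J0. good C' (insert e K)"
    proof (rule insert.IH)
      show "J0 \<noteq> {}" by fact
      show "K \<inter> J0 = {}" using insert.prems by auto
      show "\<forall>X\<in>C'. fst X \<inter> snd X = {}" using insert.prems unfolding C'_def by auto
      show "\<forall>X\<in>C'. neg_ss X \<in> C'" using insert.prems unfolding C'_def by (auto simp: neg_ss_def supp_def)
      show "\<forall>X\<in>C'. card (supp X) \<ge> 3" using insert.prems unfolding C'_def by auto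
      show "\<forall>X\<in>C'. supp X \<subseteq> K \<union> J0" using insert.prems(7) unfolding C'_def by auto
      show "\<forall>X\<in>C'. snd X \<noteq> {}" using insert.prems unfolding C'_def by auto
      show "good C' K" using insert.prems(9) unfolding C'_def good_def by auto
      show "\<forall>X\<in>C'. \<forall>Y\<in>C'. \<forall>e. X \<noteq> neg_ss Y \<and> e \<in> fst X \<inter> snd Y \<longrightarrow>
        (\<exists>Z\<in>C'. fst Z \<subseteq> (fst X \<union> fst Y) - {e} \<and> snd Z \<subseteq> (snd X \<union> snd Y) - {e})"
      proof (intro ballI allI impI)
        fix X Y e assume XY: "X \<in> C'" "Y \<in> C'" "X \<noteq> neg_ss Y \<and> e \<in> fst X \<inter> snd Y"
        then obtain Z where Z: "Z \<in> C" "fst Z \<subseteq> (fst X \<union> fst Y) - {e}" "snd Z \<subseteq> (snd X \<union> snd Y) - {e}"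
          using insert.prems(5) unfolding C'_def by blast
        have "h \<notin> supp Z" using Z XY unfolding C'_def supp_def by auto
        then show "\<exists>Z\<in>C'. fst Z \<subseteq> (fst X \<union> fst Y) - {e} \<and> snd Z \<subseteq> (snd X \<union> snd Y) - {e}"
          using Z unfolding C'_def by blast
      qed
    qed
    then obtain e where e: "e \<in> J0" "good C' (insert e K)" by blast
    have hK: "h \<notin> K" using insert.prems(2) by auto
    have he: "h \<noteq> e" using e insert.hyps by auto
    show ?thesis
    proof (cases "good C (insert e K)")
      case True then show ?thesis using e by auto
    next
      case False
      then obtain X where X: "X \<in> C" "fst X \<subseteq> insert e K" "snd X \<inter> insert e K = {}"
        unfolding good_def by blast
      have "h \<in> supp X" using X e(2) unfolding good_def C'_def by blast
      then have hX: "h \<in> snd X" using X hK he by (auto simp: supp_def)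
      have "good C (insert h K)"
      proof (rule ccontr)
        assume "\<not> good C (insert h K)"
        then obtain Y where Y: "Y \<in> C" "fst Y \<subseteq> insert h K" "snd Y \<inter> insert h K = {}"
          unfolding good_def by blast
        have hY: "h \<in> fst Y"
        proof (rule ccontr)
          assume "h \<notin> fst Y"
          then have "fst Y \<subseteq> K" "snd Y \<inter> K = {}" using Y by auto
          then show False using insert.prems(9) Y(1) unfolding good_def by blast
        qed
        have nXY: "neg_ss X \<noteq> neg_ss (neg_ss Y)"
        proof
          assume eq: "neg_ss X = neg_ss (neg_ss Y)"
          then have "snd X = fst Y" "fst X = snd Y" by (auto simp: neg_ss_def prod_eq_iff)
          then have "supp X \<subseteq> {e, h}" using X Y by (auto simp: supp_def)
          then have "card (supp X) \<le> 2"
          proof -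
            have "card (supp X) \<le> card {e, h}" using \<open>supp X \<subseteq> {e, h}\<close> by (intro card_mono) auto
            also have "\<dots> \<le> 2" by (simp add: card_insert_le_m1)
            finally show ?thesis .
          qed
          then show False using insert.prems(6) X(1) by fastforce
        qed
        have "neg_ss X \<in> C" "neg_ss Y \<in> C" using insert.prems(4) X Y by auto
        moreover have "h \<in> fst (neg_ss X) \<inter> snd (neg_ss Y)" using hX hY by (simp add: neg_ss_def)
        ultimately obtain Z where Z: "Z \<in> C" "fst Z \<subseteq> (snd X \<union> snd Y) - {h}" "snd Z \<subseteq> (fst X \<union> fst Y) - {h}"
          using insert.prems(5) nXY by (fastforce simp: neg_ss_def)
        have hZ: "h \<notin> supp Z" using Z by (auto simp: supp_def)
        have sZ: "snd Z \<subseteq> insert e K" using Z X Y by auto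
        have fZ: "fst Z \<inter> K = {}" using Z X Y by auto
        have eZ: "e \<in> snd Z"
        proof (rule ccontr)
          assume "e \<notin> snd Z"
          then have "snd Z \<subseteq> K" using sZ by auto
          moreover have "neg_ss Z \<in> C" using insert.prems(4) Z by auto
          ultimately show False using insert.prems(9) fZ unfolding good_def neg_ss_def by fastforce
        qed
        have "e \<notin> fst Z" using eZ insert.prems(3) Z(1) by auto
        then have "fst Z \<inter> insert e K = {}" using fZ by auto
        moreover have "neg_ss Z \<in> C'" using insert.prems(4) Z hZ unfolding C'_def by (auto simp: neg_ss_def supp_def)
        ultimately show False using e(2) sZ unfolding good_def neg_ss_def by fastforce
      qed
      then show ?thesis by auto
    qed
  qed
qed

lemma chain:
  assumes fin: "finite E"
    and H1: "\<forall>X\<in>C. fst X \<inter> snd X = {}"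
    and Hneg: "\<forall>X\<in>C. neg_ss X \<in> C"
    and H2: "\<forall>X\<in>C. \<forall>Y\<in>C. \<forall>e. X \<noteq> neg_ss Y \<and> e \<in> fst X \<inter> snd Y \<longrightarrow>
        (\<exists>Z\<in>C. fst Z \<subseteq> (fst X \<union> fst Y) - {e} \<and> snd Z \<subseteq> (snd X \<union> snd Y) - {e})"
    and H4: "\<forall>X\<in>C. card (supp X) \<ge> 3"
    and H5: "\<forall>X\<in>C. supp X \<subseteq> E"
    and H3: "\<forall>X\<in>C. snd X \<noteq> {}"
  shows "good C I \<Longrightarrow> I \<subseteq> E \<Longrightarrow>
     \<exists>p::'a \<Rightarrow> nat. inj_on p (E - I) \<and> (\<forall>k. good C (I \<union> {y\<in>E - I. p y < k}))"
proof (induction "card (E - I)" arbitrary: I rule: less_induct)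
  case less
  show ?case
  proof (cases "E - I = {}")
    case True
    then show ?thesis using less.prems by auto
  next
    case False
    have "finite (E - I)" using fin by simp
    moreover have "I \<inter> (E - I) = {}" by blast
    moreover have "\<forall>X\<in>C. supp X \<subseteq> I \<union> (E - I)" using H5 by blast
    ultimately obtain e where e: "e \<in> E - I" "good C (insert e I)"
      using step_gen[OF _ False _ H1 Hneg H2 H4 _ H3 less.prems(1)] by blast
    have c1: "card (E - insert e I) < card (E - I)"
      using e fin by (metis Diff_insert card_Diff1_less finite_Diff)
    have c2: "insert e I \<subseteq> E" using e less.prems by auto
    note IH = less.hyps[OF c1 e(2) c2]
    then obtain p' :: "'a \<Rightarrow> nat" where p': "inj_on p' (E - insert e I)"
      "\<forall>k. good C (insert e I \<union> {y\<in>E - insert e I. p' y < k})"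
      by blast
    define p where "p y = (if y = e then 0 else Suc (p' y))" for y
    have "inj_on p (E - I)" using p'(1) unfolding p_def inj_on_def by auto
    moreover have "good C (I \<union> {y\<in>E - I. p y < k})" for k
    proof (cases k)
      case 0
      then show ?thesis using less.prems by simp
    next
      case (Suc m)
      have "I \<union> {y\<in>E - I. p y < k} = insert e I \<union> {y\<in>E - insert e I. p' y < m}"
        using e Suc unfolding p_def by auto
      then show ?thesis using p'(2) by simp
    qed
    ultimately show ?thesis by blast
  qed
qed

lemma cM1: "e1 \<in> E \<Longrightarrow> e2 \<in> E \<Longrightarrow> e3 \<in> E \<Longrightarrow> (e1,e2) \<in> r \<Longrightarrow> (e2,e3) \<in> r
  \<Longrightarrow> ({e1,e3},{e2}) \<in> circuits_M_order E r"
  unfolding circuits_M_order_def by blast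

lemma cM2: "e1 \<in> E \<Longrightarrow> e2 \<in> E \<Longrightarrow> e3 \<in> E \<Longrightarrow> (e1,e2) \<in> r \<Longrightarrow> (e2,e3) \<in> r
  \<Longrightarrow> ({e2},{e1,e3}) \<in> circuits_M_order E r"
  unfolding circuits_M_order_def by blast

lemma cover:
  fixes p :: "'a \<Rightarrow> nat"
  assumes inj: "inj_on p E" and AB: "A \<subseteq> E" "B \<subseteq> E" "A \<inter> B = {}" "finite E"
    and sep: "\<forall>k. \<not>(A \<subseteq> {y\<in>E. p y < k} \<and> B \<inter> {y\<in>E. p y < k} = {})"
    and sep': "\<forall>k. \<not>(B \<subseteq> {y\<in>E. p y < k} \<and> A \<inter> {y\<in>E. p y < k} = {})"
    and x: "x \<in> A"
  shows "\<exists>T\<in>circuits_M_order E {(a,b). a\<in>E \<and> b\<in>E \<and> p a < p b}.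
           fst T \<subseteq> A \<and> snd T \<subseteq> B \<and> x \<in> fst T"
proof -
  let ?r = "{(a,b). a\<in>E \<and> b\<in>E \<and> p a < p b}"
  have neq: "a \<in> E \<Longrightarrow> b \<in> E \<Longrightarrow> a \<noteq> b \<Longrightarrow> p a \<noteq> p b" for a b
    using inj by (auto simp: inj_on_def)
  have neqAB: "a \<in> A \<Longrightarrow> b \<in> B \<Longrightarrow> p a \<noteq> p b" for a b
    using neq AB by blast
  have finA: "finite A" "finite B" using AB finite_subset by blast+
  show ?thesis
  proof (cases "(\<exists>b1\<in>B. p b1 < p x) \<and> (\<exists>b2\<in>B. p x < p b2)")
    case True
    then obtain b1 b2 where b: "b1 \<in> B" "p b1 < p x" "b2 \<in> B" "p x < p b2" by blast
    have "({x},{b1,b2}) \<in> circuits_M_order E ?r"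
      using b x AB by (intro cM2) auto
    then show ?thesis using b x by (intro bexI[where x="({x},{b1,b2})"]) auto
  next
    case False
    then consider "\<forall>b\<in>B. \<not> p b < p x" | "\<forall>b\<in>B. \<not> p x < p b" by blast
    then show ?thesis
    proof cases
      case 1
      then have lt: "\<forall>b\<in>B. p x < p b" using neqAB x by (meson linorder_neqE_nat)
      show ?thesis
      proof (cases "\<exists>b\<in>B. \<exists>a\<in>A. p b < p a")
        case True
        then obtain a b where ab: "b \<in> B" "a \<in> A" "p b < p a" by blast
        have "({x,a},{b}) \<in> circuits_M_order E ?r"
          using ab x AB lt by (intro cM1) auto
        then show ?thesis using ab x by (intro bexI[where x="({x,a},{b})"]) auto
      next
        case False
        then have all: "\<forall>a\<in>A. \<forall>b\<in>B. p a < p b" using neqAB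
          by (meson linorder_neqE_nat)
        have Bne: "B \<noteq> {}"
        proof
          assume "B = {}"
          then show False using sep[rule_format, of "Suc (Max (p ` E))"] AB(1) \<open>finite E\<close>
            by (auto simp: le_imp_less_Suc)
        qed
        define k where "k = Min (p ` B)"
        have "A \<subseteq> {y\<in>E. p y < k}"
        proof
          fix a assume a: "a \<in> A"
          have "k \<in> p ` B" unfolding k_def using Bne finA by (intro Min_in) auto
          then obtain b where "b \<in> B" "k = p b" by blast
          then show "a \<in> {y\<in>E. p y < k}" using a all AB by auto
        qed
        moreover have "B \<inter> {y\<in>E. p y < k} = {}"
        proof -
          have "\<forall>b\<in>B. k \<le> p b" unfolding k_def using finA by (auto intro: Min_le)
          then show ?thesis by auto
        qed
        ultimately show ?thesis using sep by blast
      qed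
    next
      case 2
      then have lt: "\<forall>b\<in>B. p b < p x" using neqAB x by (meson linorder_neqE_nat)
      show ?thesis
      proof (cases "\<exists>b\<in>B. \<exists>a\<in>A. p a < p b")
        case True
        then obtain a b where ab: "b \<in> B" "a \<in> A" "p a < p b" by blast
        have "({a,x},{b}) \<in> circuits_M_order E ?r"
          using ab x AB lt by (intro cM1) auto
        then show ?thesis using ab x by (intro bexI[where x="({a,x},{b})"]) auto
      next
        case False
        then have all: "\<forall>a\<in>A. \<forall>b\<in>B. p b < p a" using neqAB
          by (meson linorder_neqE_nat)
        define k where "k = Min (p ` A)"
        have "B \<subseteq> {y\<in>E. p y < k}"
        proof
          fix b assume b: "b \<in> B"
          have "k \<in> p ` A" unfolding k_def using x finA by (intro Min_in) auto
          then obtain a where "a \<in> A" "k = p a" by blast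
          then show "b \<in> {y\<in>E. p y < k}" using b all AB by auto
        qed
        moreover have "A \<inter> {y\<in>E. p y < k} = {}"
        proof -
          have "\<forall>b\<in>A. k \<le> p b" unfolding k_def using finA by (auto intro: Min_le)
          then show ?thesis by auto
        qed
        ultimately show ?thesis using sep' by blast
      qed
    qed
  qed
qed

lemma union_vec:
  assumes "finite S" "S \<subseteq> C2" "\<forall>T\<in>S. fst T \<subseteq> A \<and> snd T \<subseteq> B" "A \<inter> B = {}"
  shows "((\<Union>T\<in>S. fst T), (\<Union>T\<in>S. snd T)) \<in> vectors C2"
  using assms
proof (induction S rule: finite_induct)
  case empty
  then show ?case using vectors.zero by simp
next
  case (insert T S)
  have V: "((\<Union>T\<in>S. fst T), (\<Union>T\<in>S. snd T)) \<in> vectors C2" using insert by auto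
  have "comp_ss T ((\<Union>T\<in>S. fst T), (\<Union>T\<in>S. snd T)) = ((\<Union>T\<in>insert T S. fst T), (\<Union>T\<in>insert T S. snd T))"
  proof -
    have d: "\<forall>T'\<in>insert T S. \<forall>T''\<in>insert T S. fst T' \<inter> snd T'' = {}"
      using insert.prems(2,3) by blast
    show ?thesis unfolding comp_ss_def prod_eq_iff fst_conv snd_conv
    proof
      show "fst T \<union> (\<Union> (fst ` S) - snd T) = \<Union> (fst ` insert T S)" using d by blast
      show "snd T \<union> (\<Union> (snd ` S) - fst T) = \<Union> (snd ` insert T S)" using d by blast
    qed
  qed
  then show ?case using vectors.comp[OF _ V, of T] insert.prems by auto
qed

lemma cM_neg: "T \<in> circuits_M_order E r \<Longrightarrow> neg_ss T \<in> circuits_M_order E r"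
  unfolding circuits_M_order_def neg_ss_def by auto

lemma cM_sub: "circuits_M_order E r \<subseteq> Pow E \<times> Pow E"
  unfolding circuits_M_order_def by auto

theorem lemmal:
  fixes E :: "'a set" and \<C> :: "'a signed_set set"
  assumes "finite E"
    and "oriented_matroid E \<C>"
    and "simple_om \<C>"
    and "acyclic_om \<C>"
  shows "\<exists>r. r \<subseteq> E \<times> E \<and> strict_linear_order_on E r \<and>
             strong_map \<C> (circuits_M_order E r)"
proof -
  note om = assms(2)[unfolded oriented_matroid_def]
  have o1: "\<forall>X\<in>\<C>. fst X \<inter> snd X = {} \<and> supp X \<subseteq> E" using om by (rule conjunct1)
  have H1: "\<forall>X\<in>\<C>. fst X \<inter> snd X = {}" using o1 by blast
  have H5: "\<forall>X\<in>\<C>. supp X \<subseteq> E" using o1 by blast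
  have Hneg: "\<forall>X\<in>\<C>. neg_ss X \<in> \<C>" using om by (elim conjE)
  have H2: "\<forall>X\<in>\<C>. \<forall>Y\<in>\<C>. \<forall>e. X \<noteq> neg_ss Y \<and> e \<in> fst X \<inter> snd Y \<longrightarrow>
        (\<exists>Z\<in>\<C>. fst Z \<subseteq> (fst X \<union> fst Y) - {e} \<and> snd Z \<subseteq> (snd X \<union> snd Y) - {e})"
    using om by (elim conjE)
  have H4: "\<forall>X\<in>\<C>. card (supp X) \<ge> 3" using assms(3) unfolding simple_om_def .
  have H3: "\<forall>X\<in>\<C>. snd X \<noteq> {}" using assms(4) unfolding acyclic_om_def .
  have H3': "\<forall>X\<in>\<C>. fst X \<noteq> {}"
  proof
    fix X assume "X \<in> \<C>"
    then have "neg_ss X \<in> \<C>" using Hneg by blast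
    then show "fst X \<noteq> {}" using H3 by (force simp: neg_ss_def)
  qed
  have g0: "good \<C> {}" unfolding good_def using H3' by blast
  obtain p :: "'a \<Rightarrow> nat" where p: "inj_on p E" "\<forall>k. good \<C> {y\<in>E. p y < k}"
    using chain[OF assms(1) H1 Hneg H2 H4 H5 H3 g0] by auto
  define r where "r = {(a,b). a\<in>E \<and> b\<in>E \<and> p a < p b}"
  have rE: "r \<subseteq> E \<times> E" unfolding r_def by auto
  have slo: "strict_linear_order_on E r"
    unfolding strict_linear_order_on_def
  proof (intro conjI)
    show "trans r" unfolding r_def trans_def by auto
    show "irrefl r" unfolding r_def irrefl_def by auto
    show "total_on E r" unfolding r_def total_on_def using p(1)
      by (auto simp: inj_on_def) (meson linorder_neqE_nat)
  qed
  have sm: "\<C> \<subseteq> vectors (circuits_M_order E r)"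
  proof
    fix X assume X: "X \<in> \<C>"
    define A where "A = fst X"
    define B where "B = snd X"
    have AB: "A \<subseteq> E" "B \<subseteq> E" "A \<inter> B = {}"
      using X H1 H5 unfolding A_def B_def supp_def by auto
    have sep: "\<forall>k. \<not>(A \<subseteq> {y\<in>E. p y < k} \<and> B \<inter> {y\<in>E. p y < k} = {})"
      using p(2) X unfolding good_def A_def B_def by blast
    have sep': "\<forall>k. \<not>(B \<subseteq> {y\<in>E. p y < k} \<and> A \<inter> {y\<in>E. p y < k} = {})"
    proof
      fix k
      have "neg_ss X \<in> \<C>" using X Hneg by blast
      then show "\<not>(B \<subseteq> {y\<in>E. p y < k} \<and> A \<inter> {y\<in>E. p y < k} = {})"
        using p(2)[unfolded good_def, rule_format, of "neg_ss X" k] unfolding A_def B_def neg_ss_def by simp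
    qed
    have AB': "A \<inter> B = {}" "B \<inter> A = {}" using AB by auto
    define S where "S = {T\<in>circuits_M_order E r. fst T \<subseteq> A \<and> snd T \<subseteq> B}"
    have finS: "finite S"
    proof (rule finite_subset)
      show "S \<subseteq> Pow E \<times> Pow E" unfolding S_def using cM_sub by blast
      show "finite (Pow E \<times> Pow E)" using assms(1) by simp
    qed
    have covA: "\<exists>T\<in>S. x \<in> fst T" if "x \<in> A" for x
      using cover[OF p(1) AB(1,2,3) assms(1) sep sep' that] unfolding S_def r_def by blast
    have covB: "\<exists>T\<in>S. x \<in> snd T" if xB: "x \<in> B" for x
    proof -
      obtain T where T: "T \<in> circuits_M_order E r" "fst T \<subseteq> B" "snd T \<subseteq> A" "x \<in> fst T"
        using cover[OF p(1) AB(2,1) AB'(2) assms(1) sep' sep xB] unfolding r_def by blast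
      have "neg_ss T \<in> S" using cM_neg[OF T(1)] T unfolding S_def neg_ss_def by auto
      then show ?thesis using T(4) by (force simp: neg_ss_def)
    qed
    have "((\<Union>T\<in>S. fst T), (\<Union>T\<in>S. snd T)) \<in> vectors (circuits_M_order E r)"
      by (rule union_vec[OF finS _ _ AB(3)]) (auto simp: S_def)
    moreover have "(\<Union>T\<in>S. fst T) = A" using covA unfolding S_def by blast
    moreover have "(\<Union>T\<in>S. snd T) = B" using covB unfolding S_def by blast
    ultimately show "X \<in> vectors (circuits_M_order E r)" unfolding A_def B_def by simp
  qed
  show ?thesis using rE slo sm unfolding strong_map_def by blast
qed

end
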